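(* With $E^\star_{as}(M,B)$ and $E^\infty_{\rm No\text{-}HARQ}$ as defined below, $$\lim_{M\to\infty}E^\star_{as}(M,B)=\int_0^{E^\infty_{\rm No\text{-}HARQ}}Q\!\left(\frac{E-B\ln 2}{\sqrt{2E}}\right)\mathrm{d}E.$$
   Context: Fix $B>0$ and $T_{\rm rel}\in(0,1)$. Let $Q(x)=\frac{1}{\sqrt{2\pi}}\int_x^\infty e^{-t^2/2}\,dt$. Define $$E^\infty_{\rm No\text{-}HARQ}=\frac{\big(Q^{-1}(1-T_{\rm rel})\big)^2}{2}\left(1+\sqrt{1+\frac{2B\ln 2}{\big(Q^{-1}(1-T_{\rm rel})\big)^2}}\right)^2,$$ and for $M\ge1$, $$E^\star_{as}(M,B)=\min\Big\{E_1+\sum_{m=2}^M Q\!\left(\frac{\sum_{i=1}^{m-1}E_i-B\ln 2}{\sqrt{2\sum_{i=1}^{m-1}E_i}}\right)E_m\;:\;E_1,\dots,E_M\ge0,\ \sum_{m=1}^M E_m=E^\infty_{\rm No\text{-}HARQ}\Big\},$$ where $Q(\cdot)$ at zero cumulative energy is interpreted as $1$. (This is the limit, as the latency budget tends to infinity, of the minimum average energy of an IR-HARQ scheme with $M$ rounds.) *)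

theory Defs
  imports "HOL-Analysis.Analysis"
begin

definition Qf :: "real \<Rightarrow> real" where
  "Qf x = (1 / sqrt (2 * pi)) * integral {x..} (\<lambda>t. exp (- (t\<^sup>2) / 2))"

text \<open>Inverse of Q (Q is a strictly decreasing bijection from R onto (0,1)).\<close>
definition Qinv :: "real \<Rightarrow> real" where
  "Qinv y = (THE x. Qf x = y)"

definition E_noHARQ_inf :: "real \<Rightarrow> real \<Rightarrow> real" where
  "E_noHARQ_inf B T =
     (let q = Qinv (1 - T) in
      (q\<^sup>2 / 2) * (1 + sqrt (1 + 2 * B * ln 2 / q\<^sup>2))\<^sup>2)"

definition Qw :: "real \<Rightarrow> real \<Rightarrow> real" where
  "Qw B S = (if S = 0 then 1 else Qf ((S - B * ln 2) / sqrt (2 * S)))"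

definition avg_energy :: "nat \<Rightarrow> real \<Rightarrow> (nat \<Rightarrow> real) \<Rightarrow> real" where
  "avg_energy M B E = E 1 + (\<Sum>m = 2..M. Qw B (\<Sum>i = 1..m-1. E i) * E m)"

definition E_as_star :: "nat \<Rightarrow> real \<Rightarrow> real \<Rightarrow> real" where
  "E_as_star M B T = Inf {avg_energy M B E | E.
       (\<forall>m\<in>{1..M}. E m \<ge> 0) \<and> (\<Sum>m = 1..M. E m) = E_noHARQ_inf B T}"

end

theory Submission imports Defs "HOL-Probability.Distributions" begin
lemma g_int: "integrable lborel std_normal_density"
  using std_normal_moment_even[of 0] by (simp add: has_bochner_integral_iff)
lemma g_one: "integral\<^sup>L lborel std_normal_density = 1"
  using std_normal_moment_even[of 0] by (simp add: has_bochner_integral_iff)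
lemma g_univ: "integral UNIV std_normal_density = 1"
  using g_int g_one integral_lborel by metis
lemma g_on: "std_normal_density integrable_on {x..}"
proof -
  have "integrable lborel (\<lambda>t. indicator {x..} t *\<^sub>R std_normal_density t)"
    by (rule integrable_mult_indicator) (auto intro: g_int)
  then have "(\<lambda>t. indicator {x..} t *\<^sub>R std_normal_density t) integrable_on UNIV"
    by (rule integrable_on_lborel)
  moreover have "(\<lambda>t. indicator {x..} t *\<^sub>R std_normal_density t) = (\<lambda>t. if t \<in> {x..} then std_normal_density t else 0)"
    by (rule ext) (simp add: indicator_def)
  ultimately have "(\<lambda>t. if t \<in> {x..} then std_normal_density t else 0) integrable_on UNIV" by simp
  then show ?thesis using integrable_restrict_UNIV by blast
qed
lemma gU: "std_normal_density integrable_on UNIV" using g_int integrable_on_lborel by blast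
lemma Qf_eq: "Qf x = integral {x..} std_normal_density"
  unfolding Qf_def std_normal_density_def by simp
lemma Qf_nonneg: "0 \<le> Qf x"
  unfolding Qf_eq by (rule integral_nonneg[OF g_on]) auto
lemma Qf_le1: "Qf x \<le> 1"
proof -
  have "Qf x \<le> integral UNIV std_normal_density"
    unfolding Qf_eq by (rule integral_subset_le[OF _ g_on gU]) auto
  then show ?thesis using g_univ by linarith
qed
lemma Qf_anti: "x \<le> y \<Longrightarrow> Qf y \<le> Qf x"
  unfolding Qf_eq by (rule integral_subset_le[OF _ g_on g_on]) auto

lemma arg_mono:
  fixes c S S' :: real
  assumes c: "0 \<le> c" and S: "0 < S" and SS: "S \<le> S'"
  shows "(S - c) / sqrt (2 * S) \<le> (S' - c) / sqrt (2 * S')"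
proof -
  define u where "u = sqrt S"
  define v where "v = sqrt S'"
  have u: "0 < u" using S u_def by simp
  have uv: "u \<le> v" using SS u_def v_def by simp
  have v: "0 < v" using u uv by simp
  have eS: "(S - c) / sqrt (2 * S) = (u - c / u) / sqrt 2"
    using u S unfolding u_def by (simp add: real_sqrt_mult field_simps)
  have eS': "(S' - c) / sqrt (2 * S') = (v - c / v) / sqrt 2"
    using v SS S unfolding v_def by (simp add: real_sqrt_mult field_simps)
  have "c / v \<le> c / u" using c u uv by (simp add: frac_le)
  then have "u - c / u \<le> v - c / v" using uv by simp
  then show ?thesis unfolding eS eS' by (simp add: divide_right_mono)
qed

lemma Qw_le1: "Qw B S \<le> 1" by (simp add: Qw_def Qf_le1)
lemma Qw_nonneg: "0 \<le> Qw B S" by (simp add: Qw_def Qf_nonneg)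

lemma Qw_anti:
  assumes B: "0 \<le> B" and S: "0 \<le> S" and SS: "S \<le> S'"
  shows "Qw B S' \<le> Qw B S"
proof (cases "S = 0")
  case True then show ?thesis by (simp add: Qw_def Qf_le1)
next
  case False
  then have "0 < S" "S' \<noteq> 0" using S SS by auto
  moreover have "0 \<le> B * ln 2" using B by simp
  ultimately show ?thesis using False arg_mono[of "B * ln 2" S S'] SS
    by (simp add: Qw_def Qf_anti)
qed

lemma Qw_int:
  assumes B: "0 \<le> B" and a: "0 \<le> a"
  shows "Qw B integrable_on {a..b}"
proof -
  have "mono_on {a..b} (\<lambda>x. - Qw B x)"
    by (rule mono_onI) (use B a Qw_anti in auto)
  then have "(\<lambda>x. - Qw B x) integrable_on {a..b}" by (rule integrable_on_mono_on)
  then have "(\<lambda>x. - (- Qw B x)) integrable_on {a..b}" by (rule integrable_neg)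
  then show ?thesis by simp
qed

lemma piece_le:
  assumes B: "0 \<le> B" and a: "0 \<le> a" and ab: "a \<le> b"
  shows "integral {a..b} (Qw B) \<le> (b - a) * Qw B a"
proof -
  have "integral {a..b} (Qw B) \<le> integral {a..b} (\<lambda>_. Qw B a)"
    by (rule integral_le[OF Qw_int[OF B a]]) (use B a Qw_anti in auto)
  then show ?thesis using ab by simp
qed

lemma piece_ge:
  assumes B: "0 \<le> B" and a: "0 \<le> a" and ab: "a \<le> b"
  shows "(b - a) * Qw B b \<le> integral {a..b} (Qw B)"
proof -
  have "integral {a..b} (\<lambda>_. Qw B b) \<le> integral {a..b} (Qw B)"
    by (rule integral_le[OF _ Qw_int[OF B a]]) (use B a Qw_anti in auto)
  then show ?thesis using ab by simp
qed

lemma lower: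
  fixes k :: nat and E :: "nat \<Rightarrow> real"
  assumes B: "0 \<le> B"
  shows "1 \<le> k \<Longrightarrow> (\<forall>i. 1 \<le> i \<and> i \<le> k \<longrightarrow> 0 \<le> E i) \<Longrightarrow>
    integral {0..(\<Sum>i=1..k. E i)} (Qw B) \<le> E 1 + (\<Sum>m=2..k. Qw B (\<Sum>i=1..m-1. E i) * E m)"
proof (induction k)
  case 0 then show ?case by simp
next
  case (Suc k)
  show ?case
  proof (cases "k = 0")
    case True
    then have "0 \<le> E 1" using Suc.prems by auto
    moreover have "Qw B 0 = 1" by (simp add: Qw_def)
    ultimately show ?thesis using True piece_le[OF B order_refl, of "E 1"]
      by simp
  next
    case False
    define S where "S = (\<Sum>i=1..k. E i)"
    have S0: "0 \<le> S" unfolding S_def by (rule sum_nonneg) (use Suc.prems in auto)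
    have e: "0 \<le> E (Suc k)" using Suc.prems by auto
    have IH: "integral {0..S} (Qw B) \<le> E 1 + (\<Sum>m=2..k. Qw B (\<Sum>i=1..m-1. E i) * E m)"
      unfolding S_def using Suc False by auto
    have sS: "(\<Sum>i=1..Suc k. E i) = S + E (Suc k)" unfolding S_def by simp
    have comb: "integral {0..S} (Qw B) + integral {S..S + E (Suc k)} (Qw B) = integral {0..S + E (Suc k)} (Qw B)"
      using Henstock_Kurzweil_Integration.integral_combine[where a=0 and c=S and b="S + E (Suc k)" and f="Qw B"] S0 e Qw_int[OF B order_refl, of "S + E (Suc k)"] by simp
    have p: "integral {S..S + E (Suc k)} (Qw B) \<le> E (Suc k) * Qw B S"
      using piece_le[OF B S0, of "S + E (Suc k)"] e by simp
    have sm: "(\<Sum>m=2..Suc k. Qw B (\<Sum>i=1..m-1. E i) * E m) = (\<Sum>m=2..k. Qw B (\<Sum>i=1..m-1. E i) * E m) + Qw B S * E (Suc k)"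
      using False by (simp add: S_def)
    have p': "integral {S..S + E (Suc k)} (Qw B) \<le> Qw B S * E (Suc k)"
      using p by (simp only: mult.commute)
    show ?thesis unfolding sS sm using IH comb p' by linarith
  qed
qed

lemma upper:
  assumes B: "0 \<le> B" and d: "0 \<le> d"
  shows "1 \<le> k \<Longrightarrow> d + (\<Sum>m=2..k. Qw B (real (m-1) * d) * d)
     \<le> integral {0..real k * d} (Qw B) + 2 * d - d * Qw B (real k * d)"
proof (induction k)
  case 0 then show ?case by simp
next
  case (Suc k)
  show ?case
  proof (cases "k = 0")
    case True
    have "0 \<le> integral {0..d} (Qw B)"
      by (rule integral_nonneg[OF Qw_int[OF B order_refl]]) (simp add: Qw_nonneg)
    moreover have "d * Qw B d \<le> d" using mult_left_le[OF Qw_le1 d] .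
    ultimately show ?thesis using True by simp
  next
    case False
    define S where "S = real k * d"
    have S0: "0 \<le> S" unfolding S_def using d by simp
    have IH: "d + (\<Sum>m=2..k. Qw B (real (m-1) * d) * d) \<le> integral {0..S} (Qw B) + 2 * d - d * Qw B S"
      unfolding S_def using Suc False by auto
    have sS: "real (Suc k) * d = S + d" unfolding S_def by (simp add: algebra_simps)
    have comb: "integral {0..S} (Qw B) + integral {S..S + d} (Qw B) = integral {0..S + d} (Qw B)"
      using Henstock_Kurzweil_Integration.integral_combine[where a=0 and c=S and b="S+d" and f="Qw B"] S0 d Qw_int[OF B order_refl, of "S+d"] by simp
    have p: "d * Qw B (S + d) \<le> integral {S..S + d} (Qw B)"
      using piece_ge[OF B S0, of "S + d"] d by simp
    have sm: "(\<Sum>m=2..Suc k. Qw B (real (m-1) * d) * d) = (\<Sum>m=2..k. Qw B (real (m-1) * d) * d) + Qw B S * d"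
      using False by (simp add: S_def)
    have p': "d * Qw B (S + d) \<le> integral {S..S + d} (Qw B)" using p .
    have q: "Qw B S * d = d * Qw B S" by (simp only: mult.commute)
    show ?thesis unfolding sS sm q using IH comb p' by linarith
  qed
qed

theorem mainTheorem7:
  fixes B T :: real
  assumes "B > 0" and "0 < T" and "T < 1"
  shows "(\<lambda>M. E_as_star M B T) \<longlonglongrightarrow>
           integral {0..E_noHARQ_inf B T} (\<lambda>E. Qf ((E - B * ln 2) / sqrt (2 * E)))"
proof -
  have B: "0 \<le> B" using assms by simp
  define A where "A = E_noHARQ_inf B T"
  have A0: "0 \<le> A" unfolding A_def E_noHARQ_inf_def Let_def by simp
  define I where "I = integral {0..A} (Qw B)"
  have Ieq: "integral {0..A} (\<lambda>E. Qf ((E - B * ln 2) / sqrt (2 * E))) = I"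
    unfolding I_def
    by (rule integral_spike[where S="{0}"]) (auto simp: Qw_def)
  have bnd: "I \<le> E_as_star M B T \<and> E_as_star M B T \<le> I + (2 * A) / real M" if M: "1 \<le> M" for M
  proof -
    define X where "X = {avg_energy M B E | E.
       (\<forall>m\<in>{1..M}. E m \<ge> 0) \<and> (\<Sum>m = 1..M. E m) = A}"
    have star: "E_as_star M B T = Inf X" unfolding X_def E_as_star_def A_def by simp
    define d where "d = A / real M"
    have d0: "0 \<le> d" unfolding d_def using A0 by simp
    have Md: "real M * d = A" unfolding d_def using M by simp
    have mem: "avg_energy M B (\<lambda>_. d) \<in> X"
      unfolding X_def using d0 Md by auto
    have lowX: "I \<le> x" if "x \<in> X" for x
    proof -
      obtain E where E: "\<forall>m\<in>{1..M}. E m \<ge> 0" "(\<Sum>m = 1..M. E m) = A" and x: "x = avg_energy M B E"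
        using \<open>x \<in> X\<close> unfolding X_def by auto
      have "integral {0..(\<Sum>i=1..M. E i)} (Qw B) \<le> E 1 + (\<Sum>m=2..M. Qw B (\<Sum>i=1..m-1. E i) * E m)"
        by (rule lower[OF B M]) (use E(1) in auto)
      then show ?thesis unfolding x avg_energy_def I_def using E(2) by simp
    qed
    have sumd: "(\<Sum>i=1..m-1. d) = real (m-1) * d" for m :: nat by simp
    have "avg_energy M B (\<lambda>_. d) = d + (\<Sum>m=2..M. Qw B (real (m-1) * d) * d)"
      unfolding avg_energy_def sumd by simp
    also have "\<dots> \<le> integral {0..real M * d} (Qw B) + 2 * d - d * Qw B (real M * d)"
      by (rule upper[OF B d0 M])
    also have "\<dots> \<le> I + 2 * d" unfolding Md I_def using d0 Qw_nonneg[of B A] by simp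
    finally have up: "avg_energy M B (\<lambda>_. d) \<le> I + (2 * A) / real M" unfolding d_def by simp
    have "I \<le> Inf X" by (rule cInf_greatest) (use mem lowX in auto)
    moreover have "Inf X \<le> avg_energy M B (\<lambda>_. d)"
      by (rule cInf_lower[OF mem]) (use lowX in \<open>auto simp: bdd_below_def\<close>)
    ultimately show ?thesis unfolding star using up by simp
  qed
  have lim: "(\<lambda>M. I + (2 * A) / real M) \<longlonglongrightarrow> I + 0"
    by (intro tendsto_add tendsto_const lim_const_over_n)
  have "(\<lambda>M. E_as_star M B T) \<longlonglongrightarrow> I"
  proof (rule tendsto_sandwich[OF _ _ tendsto_const])
    show "\<forall>\<^sub>F n in sequentially. I \<le> E_as_star n B T"
      using bnd eventually_sequentiallyI[of 1] by auto
    show "\<forall>\<^sub>F n in sequentially. E_as_star n B T \<le> I + (2 * A) / real n"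
      using bnd eventually_sequentiallyI[of 1] by auto
    show "(\<lambda>n. I + (2 * A) / real n) \<longlonglongrightarrow> I" using lim by simp
  qed
  then show ?thesis using Ieq unfolding A_def by simp
qed

end
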